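(* Let $\mathcal E$ be a separable Hilbert space and let $\psi\in H^\infty_{\mathbb D}(\mathcal B(\mathcal E))$ with $\|\psi\|_\infty\le 1$. Then the following are equivalent: (1) $1$ is an eigenvalue of the multiplication operator $M_\psi$ on $H^2_{\mathbb D}(\mathcal E)$; (2) $1$ is an eigenvalue of $\psi(z)$ for some $z\in\mathbb D$; (3) $1$ is an eigenvalue of $\psi(z)$ for every $z\in\mathbb D$.
   Context: $\mathbb D$ is the open unit disc. $H^2_{\mathbb D}(\mathcal E)$ is the Hardy space of $\mathcal E$-valued holomorphic functions on $\mathbb D$, and $H^\infty_{\mathbb D}(\mathcal B(\mathcal E))$ is the Banach algebra of bounded holomorphic $\mathcal B(\mathcal E)$-valued functions on $\mathbb D$ with $\|\psi\|_\infty=\sup_{z\in\mathbb D}\|\psi(z)\|$. $M_\psi$ denotes the operator $f\mapsto \psi f$ on $H^2_{\mathbb D}(\mathcal E)$. *)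

theory Defs
  imports "HOL-Analysis.Analysis"
begin

text \<open>Complex Hilbert spaces (not in the distribution): a Banach space with a
  complex scalar multiplication compatible with the real one, and a complex inner
  product (conjugate-linear in the first argument) inducing the norm.\<close>

class complex_hilbert_space = banach +
  fixes scaleC :: "complex \<Rightarrow> 'a \<Rightarrow> 'a"
  fixes cinner :: "'a \<Rightarrow> 'a \<Rightarrow> complex"
  assumes scaleC_add_right: "scaleC a (x + y) = scaleC a x + scaleC a y"
    and scaleC_add_left: "scaleC (a + b) x = scaleC a x + scaleC b x"
    and scaleC_scaleC: "scaleC a (scaleC b x) = scaleC (a * b) x"
    and scaleC_one: "scaleC 1 x = x"
    and scaleR_scaleC: "scaleR r x = scaleC (complex_of_real r) x"
    and cinner_commute: "cinner x y = cnj (cinner y x)"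
    and cinner_add_left: "cinner (x + y) z = cinner x z + cinner y z"
    and cinner_scaleC_left: "cinner (scaleC a x) y = cnj a * cinner x y"
    and norm_eq_sqrt_cinner: "norm x = sqrt (Re (cinner x x))"

definition cblinear :: "('a::complex_hilbert_space \<Rightarrow> 'a) \<Rightarrow> bool" where
  "cblinear T \<longleftrightarrow> bounded_linear T \<and> (\<forall>c x. T (scaleC c x) = scaleC c (T x))"

definition is_eigenvalue :: "complex \<Rightarrow> ('a::complex_hilbert_space \<Rightarrow> 'a) \<Rightarrow> bool" where
  "is_eigenvalue c T \<longleftrightarrow> (\<exists>x. x \<noteq> 0 \<and> T x = scaleC c x)"

definition holo_vec :: "complex set \<Rightarrow> (complex \<Rightarrow> 'a::complex_hilbert_space) \<Rightarrow> bool" where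
  "holo_vec S f \<longleftrightarrow>
     (\<forall>z\<in>S. \<exists>d. ((\<lambda>w. scaleC (inverse (w - z)) (f w - f z)) \<longlongrightarrow> d) (at z))"

definition holo_op :: "complex set \<Rightarrow> (complex \<Rightarrow> 'a::complex_hilbert_space \<Rightarrow> 'a) \<Rightarrow> bool" where
  "holo_op S \<psi> \<longleftrightarrow>
     (\<forall>z\<in>S. \<exists>L. bounded_linear L \<and>
        ((\<lambda>w. onorm (\<lambda>x. scaleC (inverse (w - z)) (\<psi> w x - \<psi> z x) - L x)) \<longlongrightarrow> 0) (at z))"

text \<open>The vector-valued Hardy space H^2 on the unit disc (values off the disc irrelevant).\<close>
definition hardy2 :: "(complex \<Rightarrow> 'a::complex_hilbert_space) set" where
  "hardy2 = {f. holo_vec (ball 0 1) f \<and>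
     (\<exists>C. \<forall>r\<in>{0<..<1}.
        integral {0..2*pi} (\<lambda>t. (norm (f (complex_of_real r * exp (\<i> * complex_of_real t))))\<^sup>2) \<le> C)}"

end

theory Submission imports Defs "HOL-Complex_Analysis.Complex_Analysis" begin

lemma scaleC_zero_right[simp]: "scaleC c (0::'a::complex_hilbert_space) = 0"
  using scaleC_add_right[of c "0::'a" 0] by simp

lemma scaleC_minus1: "- (x::'a::complex_hilbert_space) = scaleC (-1) x"
  using scaleR_scaleC[of "-1" x] by simp

lemma scaleC_zero_left[simp]: "scaleC 0 (x::'a::complex_hilbert_space) = 0"
  using scaleR_scaleC[of 0 x] by simp

lemma cinner_zero_left[simp]: "cinner (0::'a::complex_hilbert_space) y = 0"
  using cinner_add_left[of "0::'a" 0 y] by simp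

lemma cinner_add_right: "cinner (x::'a::complex_hilbert_space) (y + z) = cinner x y + cinner x z"
  by (metis cinner_commute cinner_add_left complex_cnj_add)

lemma cinner_scaleC_right: "cinner (x::'a::complex_hilbert_space) (scaleC a y) = a * cinner x y"
  by (metis cinner_commute cinner_scaleC_left complex_cnj_mult complex_cnj_cnj)

lemma cinner_minus_left: "cinner (- x::'a::complex_hilbert_space) y = - cinner x y"
  by (simp add: scaleC_minus1 cinner_scaleC_left)

lemma cinner_minus_right: "cinner (x::'a::complex_hilbert_space) (- y) = - cinner x y"
  by (simp add: scaleC_minus1 cinner_scaleC_right)

lemma cinner_diff_left: "cinner (x - y::'a::complex_hilbert_space) z = cinner x z - cinner y z"
  using cinner_add_left[of x "-y" z] by (simp add: cinner_minus_left)

lemma cinner_diff_right: "cinner (x::'a::complex_hilbert_space) (y - z) = cinner x y - cinner x z"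
  using cinner_add_right[of x y "-z"] by (simp add: cinner_minus_right)

lemma cinner_self: "cinner (x::'a::complex_hilbert_space) x = complex_of_real ((norm x)^2)"
proof -
  have "Im (cinner x x) = Im (cnj (cinner x x))" using cinner_commute[of x x] by simp
  then have im: "Im (cinner x x) = 0" by simp
  have "0 \<le> sqrt (Re (cinner x x))" using norm_eq_sqrt_cinner[of x] by (metis norm_ge_zero)
  then have re: "Re (cinner x x) \<ge> 0" by simp
  have "(norm x)^2 = Re (cinner x x)" using norm_eq_sqrt_cinner[of x] re by simp
  then show ?thesis using im by (simp add: complex_eq_iff)
qed

lemma norm_scaleC: "norm (scaleC c (x::'a::complex_hilbert_space)) = cmod c * norm x"
proof -
  have "complex_of_real ((norm (scaleC c x))^2) = cinner (scaleC c x) (scaleC c x)"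
    by (rule cinner_self[symmetric])
  also have "\<dots> = cnj c * c * cinner x x"
    by (simp add: cinner_scaleC_left cinner_scaleC_right)
  also have "\<dots> = cnj c * c * complex_of_real ((norm x)^2)" by (simp only: cinner_self)
  also have "cnj c * c = complex_of_real ((cmod c)^2)" by (metis complex_norm_square mult.commute)
  finally have "(norm (scaleC c x))^2 = (cmod c * norm x)^2"
    by (metis of_real_mult of_real_eq_iff power_mult_distrib)
  then show ?thesis by (simp add: power2_eq_iff_nonneg)
qed

lemma bounded_linear_scaleC: "bounded_linear (scaleC c :: 'a::complex_hilbert_space \<Rightarrow> 'a)"
proof (rule bounded_linear_intro[where K="cmod c"])
  fix x y :: 'a and r :: real
  show "scaleC c (x + y) = scaleC c x + scaleC c y" by (rule scaleC_add_right)
  show "scaleC c (r *\<^sub>R x) = r *\<^sub>R scaleC c x"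
    by (simp add: scaleR_scaleC scaleC_scaleC mult.commute)
  show "norm (scaleC c x) \<le> norm x * cmod c" by (simp add: norm_scaleC mult.commute)
qed

lemma cauchy_schwarz_c: "cmod (cinner (x::'a::complex_hilbert_space) y) \<le> norm x * norm y"
proof (cases "y = 0")
  case True then show ?thesis by (metis cinner_commute cinner_zero_left complex_cnj_zero norm_zero mult_zero_right order_refl)
next
  case False
  define N where "N = (norm y)^2"
  define a where "a = cinner y x"
  have Npos: "N > 0" using False by (simp add: N_def)
  have cyy: "cinner y y = of_real N" by (simp add: N_def cinner_self)
  have cxy: "cinner x y = cnj a" by (simp add: a_def cinner_commute[of x y])
  have "complex_of_real ((norm (scaleC (of_real N) x - scaleC a y))^2)
     = cinner (scaleC (of_real N) x - scaleC a y) (scaleC (of_real N) x - scaleC a y)"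
    by (rule cinner_self[symmetric])
  also have "\<dots> = of_real N * of_real N * cinner x x - of_real N * a * cinner x y
       - cnj a * of_real N * cinner y x + cnj a * a * cinner y y"
    by (simp add: cinner_diff_left cinner_diff_right cinner_scaleC_left cinner_scaleC_right algebra_simps)
  also have "\<dots> = of_real N * of_real N * of_real ((norm x)^2) - of_real N * (a * cnj a)"
    unfolding cyy cxy a_def[symmetric] cinner_self[of x] by (simp add: algebra_simps)
  also have "a * cnj a = of_real ((cmod a)^2)" by (metis complex_norm_square)
  finally have "(norm (scaleC (of_real N) x - scaleC a y))^2 = N * (N * (norm x)^2 - (cmod a)^2)"
    by (metis (no_types, lifting) of_real_mult of_real_diff of_real_eq_iff right_diff_distrib mult.assoc)
  then have "0 \<le> N * (N * (norm x)^2 - (cmod a)^2)" by (metis zero_le_power2)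
  then have "(cmod a)^2 \<le> ((norm x) * norm y)^2" using Npos
    by (simp add: N_def zero_le_mult_iff power_mult_distrib mult.commute)
  then have "cmod a \<le> norm x * norm y" by (meson abs_le_square_iff  abs_of_nonneg norm_ge_zero mult_nonneg_nonneg order_trans abs_ge_self power2_le_imp_le)
  then show ?thesis using cinner_commute[of x y] by (simp add: a_def)
qed

lemma fixed_everywhere:
  fixes \<psi> :: "complex \<Rightarrow> 'e::complex_hilbert_space \<Rightarrow> 'e"
  assumes ops: "\<forall>z\<in>ball 0 1. cblinear (\<psi> z)"
    and holo: "holo_op (ball 0 1) \<psi>"
    and contr: "\<forall>z\<in>ball 0 1. onorm (\<psi> z) \<le> 1"
    and z: "z \<in> ball 0 1" and fx: "\<psi> z x = x"
    and w: "w \<in> ball 0 1"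
  shows "\<psi> w x = x"
proof -
  have bl: "bounded_linear (\<psi> u)" if "u \<in> ball 0 1" for u
    using ops that by (simp add: cblinear_def)
  have nle: "norm (\<psi> u v) \<le> norm v" if "u \<in> ball 0 1" for u v
  proof -
    have "norm (\<psi> u v) \<le> onorm (\<psi> u) * norm v" by (rule onorm[OF bl[OF that]])
    also have "\<dots> \<le> 1 * norm v" by (rule mult_right_mono) (use contr that in auto)
    finally show ?thesis by simp
  qed
  define g where "g u = cinner x (\<psi> u x)" for u
  have hol: "g holomorphic_on ball 0 1"
    unfolding holomorphic_on_def
  proof
    fix z0 :: complex assume z0: "z0 \<in> ball 0 1"
    obtain L where L: "bounded_linear L"
      and lim: "((\<lambda>w. onorm (\<lambda>v. scaleC (inverse (w - z0)) (\<psi> w v - \<psi> z0 v) - L v)) \<longlongrightarrow> 0) (at z0)"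
      using holo z0 unfolding holo_op_def by blast
    define D where "D w = (\<lambda>v. scaleC (inverse (w - z0)) (\<psi> w v - \<psi> z0 v) - L v)" for w
    have ev: "eventually (\<lambda>w. w \<noteq> z0 \<and> w \<in> ball 0 1) (at z0)"
      using eventually_at_in_open[OF open_ball z0] by (rule eventually_mono) auto
    have "eventually (\<lambda>w. norm ((g w - g z0) / (w - z0) - cinner x (L x)) \<le> norm x * (onorm (D w) * norm x)) (at z0)"
      using ev
    proof eventually_elim
      case (elim w)
      have blD: "bounded_linear (D w)" unfolding D_def
        by (intro bounded_linear_sub L bounded_linear_compose[OF bounded_linear_scaleC]
              bl elim z0) (use elim z0 bl in auto)
      have "(g w - g z0) / (w - z0) - cinner x (L x) = cinner x (D w x)"
        by (simp add: g_def D_def cinner_diff_right cinner_scaleC_right divide_inverse mult.commute)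
      then have "norm ((g w - g z0) / (w - z0) - cinner x (L x)) \<le> norm x * norm (D w x)"
        by (simp add: cauchy_schwarz_c)
      also have "\<dots> \<le> norm x * (onorm (D w) * norm x)"
        by (rule mult_left_mono[OF onorm[OF blD]]) simp
      finally show ?case .
    qed
    moreover have "((\<lambda>w. norm x * (onorm (D w) * norm x)) \<longlongrightarrow> 0) (at z0)"
      using tendsto_mult[OF tendsto_const tendsto_mult[OF lim tendsto_const]] unfolding D_def by simp
    ultimately have "((\<lambda>w. (g w - g z0) / (w - z0) - cinner x (L x)) \<longlongrightarrow> 0) (at z0)"
      by (rule Lim_null_comparison)
    then have "((\<lambda>w. (g w - g z0) / (w - z0)) \<longlongrightarrow> cinner x (L x)) (at z0)"
      by (simp add: LIM_zero_iff)
    then have "(g has_field_derivative cinner x (L x)) (at z0)"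
      by (simp add: has_field_derivative_iff)
    then show "g field_differentiable at z0 within ball 0 1"
      using field_differentiable_at_within field_differentiable_def by blast
  qed
  have gz: "g z = of_real ((norm x)^2)" by (simp add: g_def fx cinner_self)
  have bound: "norm (g u) \<le> norm (g z)" if "u \<in> ball 0 1" for u
  proof -
    have "norm (g u) \<le> norm x * norm (\<psi> u x)" unfolding g_def by (rule cauchy_schwarz_c)
    also have "\<dots> \<le> norm x * norm x" by (rule mult_left_mono[OF nle[OF that]]) simp
    also have "\<dots> = norm (g z)" by (simp add: gz power2_eq_square norm_mult)
    finally show ?thesis .
  qed
  have "g constant_on ball 0 1"
    by (rule maximum_modulus_principle[OF hol open_ball connected_ball open_ball order_refl z bound])
  then have gw: "g w = of_real ((norm x)^2)" using z w gz by (metis constant_on_def)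
  have "complex_of_real ((norm (\<psi> w x - x))^2) = cinner (\<psi> w x - x) (\<psi> w x - x)"
    by (rule cinner_self[symmetric])
  also have "\<dots> = cinner (\<psi> w x) (\<psi> w x) - cnj (g w) - g w + cinner x x"
    by (simp add: cinner_diff_left cinner_diff_right g_def cinner_commute[of "\<psi> w x" x])
  also have "\<dots> = of_real ((norm (\<psi> w x))^2 - (norm x)^2)"
    by (simp add: gw cinner_self)
  finally have "(norm (\<psi> w x - x))^2 = (norm (\<psi> w x))^2 - (norm x)^2"
    using of_real_eq_iff by blast
  moreover have "(norm (\<psi> w x))^2 \<le> (norm x)^2" using nle[OF w] by (simp add: power_mono)
  ultimately have "(norm (\<psi> w x - x))^2 \<le> 0" by simp
  then show ?thesis by simp
qed


lemma const_hardy2: "(\<lambda>_. x) \<in> (hardy2 :: (complex \<Rightarrow> 'a::complex_hilbert_space) set)"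
proof -
  have "holo_vec (ball 0 1) (\<lambda>_. x)"
    unfolding holo_vec_def by (auto intro!: exI[of _ 0])
  moreover have "integral {0..2*pi} (\<lambda>t. (norm x)\<^sup>2) = 2 * pi * (norm x)\<^sup>2"
    by simp
  ultimately show ?thesis unfolding hardy2_def
    by (intro CollectI conjI exI[of _ "2 * pi * (norm x)\<^sup>2"]) auto
qed

theorem lemma2p1:
  fixes \<psi> :: "complex \<Rightarrow> 'e::complex_hilbert_space \<Rightarrow> 'e"
  assumes separable: "\<exists>D::'e set. countable D \<and> closure D = UNIV"
    and ops: "\<forall>z\<in>ball 0 1. cblinear (\<psi> z)"
    and holo: "holo_op (ball 0 1) \<psi>"
    and contr: "\<forall>z\<in>ball 0 1. onorm (\<psi> z) \<le> 1"
  shows "((\<exists>f\<in>hardy2. (\<exists>z\<in>ball 0 1. f z \<noteq> 0) \<and> (\<forall>z\<in>ball 0 1. \<psi> z (f z) = scaleC 1 (f z)))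
            \<longleftrightarrow> (\<exists>z\<in>ball 0 1. is_eigenvalue 1 (\<psi> z)))
       \<and> ((\<exists>z\<in>ball 0 1. is_eigenvalue 1 (\<psi> z))
            \<longleftrightarrow> (\<forall>z\<in>ball 0 1. is_eigenvalue 1 (\<psi> z)))"
proof -
  have key: "\<exists>x. x \<noteq> 0 \<and> (\<forall>w\<in>ball 0 1. \<psi> w x = x)"
    if ex: "\<exists>z\<in>ball 0 1. is_eigenvalue 1 (\<psi> z)"
  proof -
    obtain z x where z: "z \<in> ball 0 1" and x: "x \<noteq> 0" "\<psi> z x = x"
      using ex unfolding is_eigenvalue_def scaleC_one by blast
    show ?thesis using fixed_everywhere[OF ops holo contr z x(2)] x(1) by blast
  qed
  have z0: "(0::complex) \<in> ball 0 1" by simp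
  show ?thesis
  proof (intro conjI iffI)
    assume "\<exists>f\<in>hardy2. (\<exists>z\<in>ball 0 1. f z \<noteq> 0) \<and> (\<forall>z\<in>ball 0 1. \<psi> z (f z) = scaleC 1 (f z))"
    then show "\<exists>z\<in>ball 0 1. is_eigenvalue 1 (\<psi> z)" by (auto simp: is_eigenvalue_def)
  next
    assume "\<exists>z\<in>ball 0 1. is_eigenvalue 1 (\<psi> z)"
    then obtain x where x: "x \<noteq> 0" "\<forall>w\<in>ball 0 1. \<psi> w x = x" using key by blast
    show "\<exists>f\<in>hardy2. (\<exists>z\<in>ball 0 1. f z \<noteq> 0) \<and> (\<forall>z\<in>ball 0 1. \<psi> z (f z) = scaleC 1 (f z))"
    proof (rule bexI[OF _ const_hardy2[of x]], intro conjI ballI)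
      show "\<exists>z\<in>ball 0 1. x \<noteq> 0" using x(1) by (intro bexI[of _ 0]) auto
    next
      fix z :: complex assume "z \<in> ball 0 1"
      then show "\<psi> z x = scaleC 1 x" using x by (simp add: scaleC_one)
    qed
  next
    assume "\<exists>z\<in>ball 0 1. is_eigenvalue 1 (\<psi> z)"
    then obtain x where x: "x \<noteq> 0" "\<forall>w\<in>ball 0 1. \<psi> w x = x" using key by blast
    then show "\<forall>z\<in>ball 0 1. is_eigenvalue 1 (\<psi> z)" by (auto simp: is_eigenvalue_def scaleC_one)
  next
    assume "\<forall>z\<in>ball 0 1. is_eigenvalue 1 (\<psi> z)"
    then show "\<exists>z\<in>ball 0 1. is_eigenvalue 1 (\<psi> z)" using z0 by blast
  qed
qed

end
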